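(* Let $G$ be a non-Mengerian graph and let $xy$ be a multiedge of $G$. Then the graph obtained from $G$ by m-subdividing $xy$ is also non-Mengerian.
   Context: Graphs are finite, loopless, and may have parallel edges. The multiplicity of a pair $x,y$ is the number of edges with endpoints $x,y$; a pair with multiplicity at least 1 is a multiedge. m-subdividing a multiedge $xy$ of multiplicity $k$ means: delete the $k$ edges between $x$ and $y$, add a new vertex $z$, add $k$ parallel edges between $x$ and $z$ and $k$ parallel edges between $z$ and $y$. A temporal graph is a pair $(G,\lambda)$ with $\lambda:E(G)\to\mathbb{Z}_{>0}$. A temporal $s,t$-path is an $s,t$-path $(s=v_1,e_1,\dots,e_{k-1},v_k=t)$ of $G$ (no repeated vertices) with $\lambda(e_1)\le\dots\le\lambda(e_{k-1})$. Two temporal $s,t$-paths are disjoint if they share no vertex other than $s,t$. For distinct non-adjacent $s,t$, a temporal $s,t$-vertex cut is a set $S\subseteq V(G)\setminus\{s,t\}$ such that $G-S$ (with $\lambda$ restricted) has no temporal $s,t$-path. $p_{G,\lambda}(s,t)$ is the maximum number of pairwise disjoint temporal $s,t$-paths and $c_{G,\lambda}(s,t)$ the minimum size of a temporal $s,t$-vertex cut. $G$ is Mengerian if $p_{G,\lambda}(s,t)=c_{G,\lambda}(s,t)$ for every $\lambda$ and every pair of distinct non-adjacent $s,t\in V(G)$. *)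

theory Defs
  imports Main
begin

text \<open>A finite loopless multigraph: vertex set V, edge set E (edges have identity, so
parallel edges are allowed), and an endpoint map assigning each edge a 2-element
set of vertices.\<close>

definition multigraph :: "'a set \<Rightarrow> 'e set \<Rightarrow> ('e \<Rightarrow> 'a set) \<Rightarrow> bool" where
  "multigraph V E ends \<longleftrightarrow> finite V \<and> finite E \<and>
     (\<forall>e\<in>E. ends e \<subseteq> V \<and> card (ends e) = 2)"

definition adjacent :: "'e set \<Rightarrow> ('e \<Rightarrow> 'a set) \<Rightarrow> 'a \<Rightarrow> 'a \<Rightarrow> bool" where
  "adjacent E ends u v \<longleftrightarrow> (\<exists>e\<in>E. ends e = {u, v})"

definition edges_between :: "'e set \<Rightarrow> ('e \<Rightarrow> 'a set) \<Rightarrow> 'a \<Rightarrow> 'a \<Rightarrow> 'e set" where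
  "edges_between E ends x y = {e\<in>E. ends e = {x, y}}"

definition temporal_path ::
  "'a set \<Rightarrow> 'e set \<Rightarrow> ('e \<Rightarrow> 'a set) \<Rightarrow> ('e \<Rightarrow> nat) \<Rightarrow> 'a set \<Rightarrow> 'a \<Rightarrow> 'a \<Rightarrow>
   'a list \<times> 'e list \<Rightarrow> bool" where
  "temporal_path V E ends lam S s t P \<longleftrightarrow>
     (let vs = fst P; es = snd P in
       vs \<noteq> [] \<and> hd vs = s \<and> last vs = t \<and> distinct vs \<and>
       set vs \<subseteq> V - S \<and>
       length es + 1 = length vs \<and>
       (\<forall>i < length es. es ! i \<in> E \<and> ends (es ! i) = {vs ! i, vs ! Suc i}) \<and>
       sorted (map lam es))"

definition paths_disjoint :: "'a \<Rightarrow> 'a \<Rightarrow> 'a list \<times> 'e list \<Rightarrow> 'a list \<times> 'e list \<Rightarrow> bool" where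
  "paths_disjoint s t P Q \<longleftrightarrow> set (fst P) \<inter> set (fst Q) \<subseteq> {s, t}"

definition max_disjoint_paths ::
  "'a set \<Rightarrow> 'e set \<Rightarrow> ('e \<Rightarrow> 'a set) \<Rightarrow> ('e \<Rightarrow> nat) \<Rightarrow> 'a \<Rightarrow> 'a \<Rightarrow> nat" where
  "max_disjoint_paths V E ends lam s t =
     (GREATEST k. \<exists>P :: nat \<Rightarrow> 'a list \<times> 'e list.
        (\<forall>i<k. temporal_path V E ends lam {} s t (P i)) \<and>
        (\<forall>i<k. \<forall>j<k. i \<noteq> j \<longrightarrow> paths_disjoint s t (P i) (P j)))"

definition temporal_vertex_cut ::
  "'a set \<Rightarrow> 'e set \<Rightarrow> ('e \<Rightarrow> 'a set) \<Rightarrow> ('e \<Rightarrow> nat) \<Rightarrow> 'a \<Rightarrow> 'a \<Rightarrow> 'a set \<Rightarrow> bool" where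
  "temporal_vertex_cut V E ends lam s t S \<longleftrightarrow>
     S \<subseteq> V - {s, t} \<and> \<not> (\<exists>P. temporal_path V E ends lam S s t P)"

definition min_vertex_cut ::
  "'a set \<Rightarrow> 'e set \<Rightarrow> ('e \<Rightarrow> 'a set) \<Rightarrow> ('e \<Rightarrow> nat) \<Rightarrow> 'a \<Rightarrow> 'a \<Rightarrow> nat" where
  "min_vertex_cut V E ends lam s t =
     (LEAST k. \<exists>S. temporal_vertex_cut V E ends lam s t S \<and> card S = k)"

definition mengerian :: "'a set \<Rightarrow> 'e set \<Rightarrow> ('e \<Rightarrow> 'a set) \<Rightarrow> bool" where
  "mengerian V E ends \<longleftrightarrow>
     (\<forall>lam :: 'e \<Rightarrow> nat. (\<forall>e\<in>E. lam e > 0) \<longrightarrow>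
       (\<forall>s\<in>V. \<forall>t\<in>V. s \<noteq> t \<longrightarrow> \<not> adjacent E ends s t \<longrightarrow>
          max_disjoint_paths V E ends lam s t = min_vertex_cut V E ends lam s t))"

definition m_subdivision ::
  "'a set \<Rightarrow> 'e set \<Rightarrow> ('e \<Rightarrow> 'a set) \<Rightarrow> 'a \<Rightarrow> 'a \<Rightarrow> 'a \<Rightarrow>
   'a set \<Rightarrow> 'e set \<Rightarrow> ('e \<Rightarrow> 'a set) \<Rightarrow> bool" where
  "m_subdivision V E ends x y z V' E' ends' \<longleftrightarrow>
     (let Exy = edges_between E ends x y in
      z \<notin> V \<and> V' = insert z V \<and>
      (\<exists>E1 E2. finite E1 \<and> finite E2 \<and> card E1 = card Exy \<and> card E2 = card Exy \<and>
         E1 \<inter> E2 = {} \<and> E1 \<inter> E = {} \<and> E2 \<inter> E = {} \<and>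
         E' = (E - Exy) \<union> E1 \<union> E2 \<and>
         (\<forall>e\<in>E - Exy. ends' e = ends e) \<and>
         (\<forall>e\<in>E1. ends' e = {x, z}) \<and>
         (\<forall>e\<in>E2. ends' e = {z, y})))"

end

theory Submission
  imports Defs
begin

lemma tp_internal:
  assumes "temporal_path V E ends lam S s t P" "s \<noteq> t" "\<not> adjacent E ends s t"
  shows "\<exists>v\<in>set (fst P). v \<noteq> s \<and> v \<noteq> t"
proof -
  obtain vs es where P: "P = (vs, es)" by (cases P)
  have A: "vs \<noteq> []" "hd vs = s" "last vs = t" "distinct vs" "length es + 1 = length vs"
     "\<forall>i < length es. es ! i \<in> E \<and> ends (es ! i) = {vs ! i, vs ! Suc i}"
    using assms(1) unfolding temporal_path_def P Let_def by auto
  have s0: "vs ! 0 = s" using A by (simp add: hd_conv_nth)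
  have tl: "vs ! (length vs - 1) = t" using A by (simp add: last_conv_nth)
  have "length vs \<noteq> 1" using s0 tl assms(2) by auto
  moreover have "length vs \<noteq> 2"
  proof
    assume "length vs = 2"
    then have "length es = 1" using A by simp
    then have "es ! 0 \<in> E \<and> ends (es ! 0) = {vs ! 0, vs ! 1}" using A by auto
    moreover have "vs ! 1 = t" using tl \<open>length vs = 2\<close> by simp
    ultimately have "es ! 0 \<in> E \<and> ends (es ! 0) = {s, t}" using s0 by simp
    then show False using assms(3) unfolding adjacent_def by blast
  qed
  moreover have "length vs \<noteq> 0" using A by simp
  ultimately have len: "length vs \<ge> 3" by presburger
  have "vs ! 1 \<noteq> vs ! 0" using nth_eq_iff_index_eq[OF A(4), of 1 0] len A(1) by simp
  then have "vs ! 1 \<noteq> s" using s0 by simp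
  moreover have "vs ! 1 \<noteq> vs ! (length vs - 1)" using A(4) len by (simp add: nth_eq_iff_index_eq)
  then have "vs ! 1 \<noteq> t" using tl by simp
  moreover have "vs ! 1 \<in> set vs" using len by auto
  ultimately show ?thesis using P by auto
qed

lemma inj_bound:
  fixes P :: "nat \<Rightarrow> 'a list \<times> 'e list"
  assumes "finite T" "\<forall>i<k. \<exists>v\<in>set (fst (P i)) \<inter> T. v \<noteq> s \<and> v \<noteq> t"
    "\<forall>i<k. \<forall>j<k. i \<noteq> j \<longrightarrow> paths_disjoint s t (P i) (P j)"
  shows "k \<le> card T"
proof -
  define f where "f i = (SOME v. v \<in> set (fst (P i)) \<inter> T \<and> v \<noteq> s \<and> v \<noteq> t)" for i
  have f: "f i \<in> set (fst (P i)) \<inter> T \<and> f i \<noteq> s \<and> f i \<noteq> t" if "i < k" for i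
    unfolding f_def using assms(2) that by (metis (mono_tags, lifting) someI_ex)
  have "inj_on f {..<k}"
  proof (rule inj_onI)
    fix i j assume "i \<in> {..<k}" "j \<in> {..<k}" "f i = f j"
    show "i = j"
    proof (rule ccontr)
      assume "i \<noteq> j"
      then have "set (fst (P i)) \<inter> set (fst (P j)) \<subseteq> {s, t}"
        using assms(3) \<open>i \<in> {..<k}\<close> \<open>j \<in> {..<k}\<close> unfolding paths_disjoint_def by auto
      moreover have "f i \<in> set (fst (P i))" "f j \<in> set (fst (P j))" "f i \<noteq> s" "f i \<noteq> t"
        using f \<open>i \<in> {..<k}\<close> \<open>j \<in> {..<k}\<close> by auto
      ultimately show False using \<open>f i = f j\<close> by auto
    qed
  qed
  moreover have "f ` {..<k} \<subseteq> T" using f by auto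
  ultimately show ?thesis using card_inj_on_le[OF _ _ assms(1)] by fastforce
qed

definition family :: "'a set \<Rightarrow> 'e set \<Rightarrow> ('e \<Rightarrow> 'a set) \<Rightarrow> ('e \<Rightarrow> nat) \<Rightarrow> 'a \<Rightarrow> 'a \<Rightarrow> nat \<Rightarrow> (nat \<Rightarrow> 'a list \<times> 'e list) \<Rightarrow> bool" where
  "family V E ends lam s t k P \<longleftrightarrow> (\<forall>i<k. temporal_path V E ends lam {} s t (P i)) \<and>
        (\<forall>i<k. \<forall>j<k. i \<noteq> j \<longrightarrow> paths_disjoint s t (P i) (P j))"

lemma family_bound:
  assumes "finite V" "s \<noteq> t" "\<not> adjacent E ends s t" "family V E ends lam s t k P"
  shows "k \<le> card V"
proof (rule inj_bound[OF assms(1), of k P s t])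
  show "\<forall>i<k. \<exists>v\<in>set (fst (P i)) \<inter> V. v \<noteq> s \<and> v \<noteq> t"
  proof (intro allI impI)
    fix i assume "i < k"
    then have tp: "temporal_path V E ends lam {} s t (P i)" using assms(4) unfolding family_def by auto
    then have "set (fst (P i)) \<subseteq> V" unfolding temporal_path_def Let_def by auto
    then show "\<exists>v\<in>set (fst (P i)) \<inter> V. v \<noteq> s \<and> v \<noteq> t" using tp_internal[OF tp assms(2,3)] by blast
  qed
qed (use assms(4) in \<open>auto simp: family_def\<close>)

lemma mdp_props:
  assumes "finite V" "s \<noteq> t" "\<not> adjacent E ends s t"
  shows "\<exists>P. family V E ends lam s t (max_disjoint_paths V E ends lam s t) P"
    and "family V E ends lam s t k P \<Longrightarrow> k \<le> max_disjoint_paths V E ends lam s t"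
proof -
  have eq: "max_disjoint_paths V E ends lam s t = (GREATEST k. \<exists>P. family V E ends lam s t k P)"
    unfolding max_disjoint_paths_def family_def by simp
  have z: "\<exists>P. family V E ends lam s t 0 P" unfolding family_def by auto
  have b: "\<And>y. (\<exists>P. family V E ends lam s t y P) \<Longrightarrow> y \<le> card V"
    using family_bound[OF assms] by blast
  show "\<exists>P. family V E ends lam s t (max_disjoint_paths V E ends lam s t) P"
    unfolding eq by (rule GreatestI_nat[where P="\<lambda>k. \<exists>P. family V E ends lam s t k P", OF z b])
  show "family V E ends lam s t k P \<Longrightarrow> k \<le> max_disjoint_paths V E ends lam s t"
    unfolding eq by (rule Greatest_le_nat[OF _ b]) auto
qed

lemma mvc_props:
  assumes "finite V" "s \<noteq> t" "\<not> adjacent E ends s t"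
  shows "\<exists>S. temporal_vertex_cut V E ends lam s t S \<and> card S = min_vertex_cut V E ends lam s t"
    and "temporal_vertex_cut V E ends lam s t S \<Longrightarrow> min_vertex_cut V E ends lam s t \<le> card S"
proof -
  have ex: "temporal_vertex_cut V E ends lam s t (V - {s,t})"
    unfolding temporal_vertex_cut_def
  proof (intro conjI notI)
    assume "\<exists>P. temporal_path V E ends lam (V - {s, t}) s t P"
    then obtain P where tp: "temporal_path V E ends lam (V - {s, t}) s t P" by blast
    then have "set (fst P) \<subseteq> V - (V - {s,t})" unfolding temporal_path_def Let_def by auto
    then show False using tp_internal[OF tp assms(2,3)] by auto
  qed auto
  show "\<exists>S. temporal_vertex_cut V E ends lam s t S \<and> card S = min_vertex_cut V E ends lam s t"
    unfolding min_vertex_cut_def by (rule LeastI_ex) (use ex in blast)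
  show "temporal_vertex_cut V E ends lam s t S \<Longrightarrow> min_vertex_cut V E ends lam s t \<le> card S"
    unfolding min_vertex_cut_def by (rule Least_le) blast
qed

lemma weak_duality:
  assumes "finite V" "s \<noteq> t" "\<not> adjacent E ends s t"
  shows "max_disjoint_paths V E ends lam s t \<le> min_vertex_cut V E ends lam s t"
proof -
  obtain P where P: "family V E ends lam s t (max_disjoint_paths V E ends lam s t) P"
    using mdp_props(1)[OF assms] by blast
  obtain S where S: "temporal_vertex_cut V E ends lam s t S" "card S = min_vertex_cut V E ends lam s t"
    using mvc_props(1)[OF assms] by blast
  have fin: "finite S" using S(1) assms(1) unfolding temporal_vertex_cut_def by (meson finite_Diff finite_subset)
  have "max_disjoint_paths V E ends lam s t \<le> card S"
  proof (rule inj_bound[OF fin, of _ P s t])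
    show "\<forall>i<max_disjoint_paths V E ends lam s t. \<exists>v\<in>set (fst (P i)) \<inter> S. v \<noteq> s \<and> v \<noteq> t"
    proof (intro allI impI)
      fix i assume "i < max_disjoint_paths V E ends lam s t"
      then have tp: "temporal_path V E ends lam {} s t (P i)" using P unfolding family_def by auto
      have "\<not> temporal_path V E ends lam S s t (P i)" using S(1) unfolding temporal_vertex_cut_def by blast
      then have "set (fst (P i)) \<inter> S \<noteq> {}" using tp unfolding temporal_path_def Let_def by auto
      then show "\<exists>v\<in>set (fst (P i)) \<inter> S. v \<noteq> s \<and> v \<noteq> t" using S(1) unfolding temporal_vertex_cut_def by blast
    qed
  qed (use P in \<open>auto simp: family_def\<close>)
  then show ?thesis using S by simp
qed



locale subdiv =
  fixes V :: "'a set" and E :: "'e set" and ends :: "'e \<Rightarrow> 'a set" and lam :: "'e \<Rightarrow> nat"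
    and x y z :: 'a and E1 E2 :: "'e set" and f1 f2 :: "'e \<Rightarrow> 'e"
    and E' :: "'e set" and ends' :: "'e \<Rightarrow> 'a set" and lam' :: "'e \<Rightarrow> nat"
  assumes mg: "multigraph V E ends" and xV: "x \<in> V" and yV: "y \<in> V" and xy: "x \<noteq> y"
    and zV: "z \<notin> V"
    and d1: "E1 \<inter> E = {}" and d2: "E2 \<inter> E = {}" and d12: "E1 \<inter> E2 = {}"
    and E'_eq: "E' = (E - edges_between E ends x y) \<union> E1 \<union> E2"
    and e_old: "\<forall>e\<in>E - edges_between E ends x y. ends' e = ends e"
    and e1: "\<forall>e\<in>E1. ends' e = {x, z}" and e2: "\<forall>e\<in>E2. ends' e = {z, y}"
    and b1: "bij_betw f1 E1 (edges_between E ends x y)"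
    and b2: "bij_betw f2 E2 (edges_between E ends x y)"
    and lam'_def: "lam' = (\<lambda>e. if e \<in> E1 then lam (f1 e) else if e \<in> E2 then lam (f2 e) else lam e)"
begin

abbreviation "Exy \<equiv> edges_between E ends x y"

lemma endsV: "e \<in> E \<Longrightarrow> ends e \<subseteq> V"
  using mg unfolding multigraph_def by auto

lemma Exy_E: "e \<in> Exy \<Longrightarrow> e \<in> E \<and> ends e = {x, y}"
  unfolding edges_between_def by auto

lemma lam'_E: "e \<in> E \<Longrightarrow> lam' e = lam e"
  using d1 d2 unfolding lam'_def by auto

lemma xz: "x \<noteq> z" and yz: "y \<noteq> z" using xV yV zV by auto

lemma edge_noz:
  assumes "e \<in> E'" "ends' e = {a, b}" "a \<noteq> z" "b \<noteq> z"
  shows "e \<in> E \<and> e \<notin> Exy \<and> ends e = {a, b}"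
proof -
  have "e \<notin> E1" using e1 assms by (metis insertCI insertE singletonD)
  moreover have "e \<notin> E2" using e2 assms by (metis insertCI insertE singletonD)
  ultimately have "e \<in> E - Exy" using assms(1) E'_eq by auto
  then show ?thesis using e_old assms(2) by auto
qed

lemma edge_z:
  assumes "e \<in> E'" "ends' e = {a, z}"
  shows "(e \<in> E1 \<and> a = x) \<or> (e \<in> E2 \<and> a = y)"
proof -
  have "e \<notin> E - Exy"
  proof
    assume "e \<in> E - Exy"
    then have "ends e = {a, z}" using e_old assms by auto
    then show False using endsV[of e] \<open>e \<in> E - Exy\<close> zV by auto
  qed
  then have "e \<in> E1 \<or> e \<in> E2" using assms(1) E'_eq by auto
  then show ?thesis
  proof
    assume "e \<in> E1"
    then have "{x, z} = {a, z}" using e1 assms by auto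
    then have "a = x" using xz by (metis doubleton_eq_iff)
    then show ?thesis using \<open>e \<in> E1\<close> by auto
  next
    assume "e \<in> E2"
    then have "{y, z} = {a, z}" using e2 assms by (simp add: insert_commute)
    then have "a = y" using yz by (metis doubleton_eq_iff)
    then show ?thesis using \<open>e \<in> E2\<close> by auto
  qed
qed

definition g where "g e = (if e \<in> E1 then f1 e else f2 e)"

lemma g_props:
  assumes "e \<in> E1 \<or> e \<in> E2"
  shows "g e \<in> E \<and> ends (g e) = {x, y} \<and> lam (g e) = lam' e"
proof -
  have "g e \<in> Exy" using assms b1 b2 unfolding g_def bij_betw_def by auto
  moreover have "lam (g e) = lam' e" using assms d12 unfolding g_def lam'_def by auto
  ultimately show ?thesis using Exy_E by auto
qed

end


context subdiv begin

lemma contract: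
  assumes tp: "temporal_path (insert z V) E' ends' lam' S s t P" and sV: "s \<in> V" and tV: "t \<in> V"
  shows "\<exists>Q. temporal_path V E ends lam S s t Q \<and> set (fst Q) \<subseteq> set (fst P)"
proof -
  obtain vs es where P: "P = (vs, es)" by (cases P)
  have A: "vs \<noteq> []" "hd vs = s" "last vs = t" "distinct vs" "set vs \<subseteq> insert z V - S"
     "length es + 1 = length vs"
     "\<And>i. i < length es \<Longrightarrow> es ! i \<in> E' \<and> ends' (es ! i) = {vs ! i, vs ! Suc i}"
     "sorted (map lam' es)"
    using tp unfolding temporal_path_def P Let_def by auto
  show ?thesis
  proof (cases "z \<in> set vs")
    case False
    have ed: "es ! i \<in> E \<and> ends (es ! i) = {vs ! i, vs ! Suc i}" if "i < length es" for i
    proof -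
      have "vs ! i \<noteq> z" "vs ! Suc i \<noteq> z" using False that A(6) nth_mem[of i vs] nth_mem[of "Suc i" vs] by auto
      then show ?thesis using edge_noz A(7)[OF that] by blast
    qed
    have meq: "map lam es = map lam' es"
      unfolding map_eq_conv by (metis ed in_set_conv_nth lam'_E)
    have srt: "sorted (map lam es)" unfolding meq by (rule A(8))
    have "temporal_path V E ends lam S s t (vs, es)"
      using A ed False srt unfolding temporal_path_def Let_def by auto
    then show ?thesis using P by auto
  next
    case True
    then obtain k where k: "k < length vs" "vs ! k = z" by (metis in_set_conv_nth)
    define n where "n = length es"
    have lvs: "length vs = Suc n" using A(6) n_def by simp
    have k0: "k \<noteq> 0"
    proof
      assume "k = 0"
      then have "s = z" using k(2) A(2) hd_conv_nth[OF A(1)] by simp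
      then show False using sV zV by simp
    qed
    have kn: "k \<noteq> n"
    proof
      assume "k = n"
      then have "t = z" using k(2) A(3) last_conv_nth[OF A(1)] lvs by simp
      then show False using tV zV by simp
    qed
    have kk: "1 \<le> k" "k < n" using k0 kn k lvs by auto
    define e1 where "e1 = es ! (k - 1)"
    define e2 where "e2 = es ! k"
    have E1: "e1 \<in> E' \<and> ends' e1 = {vs ! (k - 1), z}"
      using A(7)[of "k - 1"] kk k(2) n_def unfolding e1_def by auto
    have E2: "e2 \<in> E' \<and> ends' e2 = {vs ! Suc k, z}"
      using A(7)[of "k"] kk k(2) n_def unfolding e2_def by (auto simp: insert_commute)
    have dd: "vs ! (k - 1) \<noteq> vs ! Suc k"
      using nth_eq_iff_index_eq[OF A(4), of "k - 1" "Suc k"] kk lvs by auto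
    have ee: "{vs ! (k - 1), vs ! Suc k} = {x, y}"
      using edge_z[OF conjunct1[OF E1] conjunct2[OF E1]] edge_z[OF conjunct1[OF E2] conjunct2[OF E2]] dd xy
      by auto
    have ge: "g e1 \<in> E \<and> ends (g e1) = {vs ! (k - 1), vs ! Suc k} \<and> lam (g e1) = lam' e1"
      using g_props[of e1] edge_z[OF conjunct1[OF E1] conjunct2[OF E1]] ee by auto
    have noz: "vs ! i \<noteq> z" if "i < length vs" "i \<noteq> k" for i
      using nth_eq_iff_index_eq[OF A(4), of i k] that k by auto
    have other: "es ! i \<in> E \<and> ends (es ! i) = {vs ! i, vs ! Suc i}"
      if "i < n" "i \<noteq> k - 1" "i \<noteq> k" for i
    proof -
      have "vs ! i \<noteq> z" "vs ! Suc i \<noteq> z" using noz that lvs kk by auto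
      then show ?thesis using edge_noz A(7) that n_def by blast
    qed
    define vs2 where "vs2 = take k vs @ drop (Suc k) vs"
    define es2 where "es2 = take (k - 1) es @ g e1 # drop (Suc k) es"
    have lvs2: "length vs2 = n" unfolding vs2_def using lvs kk by auto
    have les2: "length es2 = n - 1" unfolding es2_def using n_def kk by auto
    have vs2n: "vs2 ! i = (if i < k then vs ! i else vs ! Suc i)" if "i < n" for i
      unfolding vs2_def using that kk lvs by (auto simp: nth_append)
    have es2n: "es2 ! i = (if i < k - 1 then es ! i else if i = k - 1 then g e1 else es ! Suc i)"
      if "i < n - 1" for i
      unfolding es2_def using that kk n_def by (auto simp: nth_append nth_Cons')
    have edges2: "es2 ! i \<in> E \<and> ends (es2 ! i) = {vs2 ! i, vs2 ! Suc i}" if "i < length es2" for i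
    proof -
      consider "i < k - 1" | "i = k - 1" | "i > k - 1" by linarith
      then show ?thesis
      proof cases
        case 1
        then show ?thesis using es2n vs2n other that les2 kk by auto
      next
        case 2
        then show ?thesis using es2n vs2n ge that les2 kk by auto
      next
        case 3
        then have "es2 ! i = es ! Suc i" "vs2 ! i = vs ! Suc i" "vs2 ! Suc i = vs ! Suc (Suc i)"
          using es2n vs2n that les2 kk by auto
        then show ?thesis using other[of "Suc i"] that les2 3 kk by auto
      qed
    qed
    have es_dec: "es = take (k - 1) es @ e1 # e2 # drop (Suc k) es"
    proof -
      have "es = take (Suc k) es @ drop (Suc k) es" by simp
      moreover have "take (Suc k) es = take k es @ [e2]"
        using kk n_def unfolding e2_def by (simp add: take_Suc_conv_app_nth)
      moreover have "take k es = take (k - 1) es @ [e1]"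
        using take_Suc_conv_app_nth[of "k - 1" es] kk n_def unfolding e1_def by simp
      ultimately show ?thesis by simp
    qed
    have m1: "map lam (take (k - 1) es) = map lam' (take (k - 1) es)"
      unfolding map_eq_conv
    proof
      fix e assume "e \<in> set (take (k - 1) es)"
      then obtain i where "i < k - 1" "e = es ! i" using kk n_def by (auto simp: in_set_conv_nth)
      then show "lam e = lam' e" using other[of i] kk lam'_E by auto
    qed
    have m2: "map lam (drop (Suc k) es) = map lam' (drop (Suc k) es)"
      unfolding map_eq_conv
    proof
      fix e assume "e \<in> set (drop (Suc k) es)"
      then obtain i where "i < n - Suc k" "e = es ! (Suc k + i)" using kk n_def by (auto simp: in_set_conv_nth)
      then have "Suc k + i < n" "e = es ! (Suc k + i)" by auto
      then show "lam e = lam' e" using other[of "Suc k + i"] kk lam'_E by auto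
    qed
    have "sorted (map lam' (take (k - 1) es @ e1 # e2 # drop (Suc k) es))"
      using A(8) es_dec by metis
    then have sorted2: "sorted (map lam es2)"
      unfolding es2_def map_append list.map m1 m2 using ge by (auto simp: sorted_append)
    have vs_dec: "vs = take k vs @ z # drop (Suc k) vs"
      using id_take_nth_drop[OF k(1)] k(2) by simp
    have dv: "distinct (take k vs @ z # drop (Suc k) vs)"
      using A(4) by (subst (asm) vs_dec)
    have dist2: "distinct vs2" "z \<notin> set vs2"
      using dv unfolding vs2_def by auto
    have "set vs2 \<subseteq> set vs"
      unfolding vs2_def using set_take_subset[of k vs] set_drop_subset[of "Suc k" vs] by auto
    note dist2 = dist2 this
    have tk: "take k vs \<noteq> []" using kk A(1) by simp
    have hd2: "hd vs2 = s"
      using A(2) kk tk unfolding vs2_def by simp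
    have dk: "drop (Suc k) vs \<noteq> []" using kk lvs by simp
    have last2: "last vs2 = t"
      using A(3) kk lvs dk unfolding vs2_def by simp
    have "temporal_path V E ends lam S s t (vs2, es2)"
      unfolding temporal_path_def Let_def fst_conv snd_conv
      using dist2 hd2 last2 lvs2 les2 edges2 sorted2 A(5) kk
      by auto
    then show ?thesis using dist2 P by auto
  qed
qed

end


context subdiv begin

lemma lift_noxy:
  assumes tp: "temporal_path V E ends lam S s t (vs, es)"
    and nx: "\<And>i. i < length es \<Longrightarrow> es ! i \<notin> Exy"
  shows "temporal_path (insert z V) E' ends' lam' S s t (vs, es)"
proof -
  have A: "vs \<noteq> []" "hd vs = s" "last vs = t" "distinct vs" "set vs \<subseteq> V - S"
     "length es + 1 = length vs"
     "\<And>i. i < length es \<Longrightarrow> es ! i \<in> E \<and> ends (es ! i) = {vs ! i, vs ! Suc i}"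
     "sorted (map lam es)"
    using tp unfolding temporal_path_def Let_def by auto
  have ed: "es ! i \<in> E' \<and> ends' (es ! i) = {vs ! i, vs ! Suc i}" if "i < length es" for i
    using A(7)[OF that] nx[OF that] e_old E'_eq by auto
  have meq: "map lam' es = map lam es"
    unfolding map_eq_conv by (metis A(7) in_set_conv_nth lam'_E)
  have srt: "sorted (map lam' es)" unfolding meq by (rule A(8))
  show ?thesis unfolding temporal_path_def Let_def fst_conv snd_conv
    using A ed srt by auto
qed

lemma expand:
  assumes tp: "temporal_path V E ends lam S s t P" and zS: "z \<notin> S"
  shows "\<exists>Q. temporal_path (insert z V) E' ends' lam' S s t Q"
proof -
  obtain vs es where P: "P = (vs, es)" by (cases P)
  have tp': "temporal_path V E ends lam S s t (vs, es)" using tp P by simp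
  have A: "vs \<noteq> []" "hd vs = s" "last vs = t" "distinct vs" "set vs \<subseteq> V - S"
     "length es + 1 = length vs"
     "\<And>i. i < length es \<Longrightarrow> es ! i \<in> E \<and> ends (es ! i) = {vs ! i, vs ! Suc i}"
     "sorted (map lam es)"
    using tp unfolding temporal_path_def P Let_def by auto
  show ?thesis
  proof (cases "\<exists>j < length es. es ! j \<in> Exy")
    case False
    then show ?thesis using lift_noxy[OF tp'] by blast
  next
    case True
    then obtain j where j: "j < length es" "es ! j \<in> Exy" by blast
    define n where "n = length es"
    have lvs: "length vs = Suc n" using A(6) n_def by simp
    have ej: "{vs ! j, vs ! Suc j} = {x, y}" using A(7)[OF j(1)] Exy_E[OF j(2)] by simp
    have uniq: "es ! i \<notin> Exy" if "i < n" "i \<noteq> j" for i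
    proof
      assume "es ! i \<in> Exy"
      then have ei: "{vs ! i, vs ! Suc i} = {x, y}" using A(7)[of i] Exy_E that n_def by auto
      have inj: "\<And>a b. a < Suc n \<Longrightarrow> b < Suc n \<Longrightarrow> vs ! a = vs ! b \<Longrightarrow> a = b"
        using nth_eq_iff_index_eq[OF A(4)] lvs by auto
      have "j < n" using j n_def by simp
      show False
      proof (cases "vs ! i = vs ! j")
        case True
        then show ?thesis using inj[of i j] that \<open>j < n\<close> by auto
      next
        case False
        then have "vs ! i = vs ! Suc j" "vs ! Suc i = vs ! j" using ei ej by (auto simp: doubleton_eq_iff)
        then have "i = Suc j" "Suc i = j" using inj that \<open>j < n\<close> by auto
        then show False by simp
      qed
    qed
    obtain h1 h2 where h: "h1 \<in> E'" "h2 \<in> E'" "ends' h1 = {vs ! j, z}" "ends' h2 = {z, vs ! Suc j}"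
       "lam' h1 = lam (es ! j)" "lam' h2 = lam (es ! j)"
    proof -
      define a1 where "a1 = inv_into E1 f1 (es ! j)"
      define a2 where "a2 = inv_into E2 f2 (es ! j)"
      have a1: "a1 \<in> E1" "f1 a1 = es ! j" unfolding a1_def using b1 j(2)
        by (auto simp: bij_betw_def inv_into_into f_inv_into_f)
      have a2: "a2 \<in> E2" "f2 a2 = es ! j" unfolding a2_def using b2 j(2)
        by (auto simp: bij_betw_def inv_into_into f_inv_into_f)
      have a2n: "a2 \<notin> E1" using a2 d12 by auto
      have l1: "lam' a1 = lam (es ! j)" using a1 unfolding lam'_def by simp
      have l2: "lam' a2 = lam (es ! j)" using a2 a2n unfolding lam'_def by simp
      have in1: "a1 \<in> E'" "a2 \<in> E'" using a1 a2 E'_eq by auto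
      have en1: "ends' a1 = {x, z}" "ends' a2 = {z, y}" using a1 a2 e1 e2 by auto
      show ?thesis
      proof (cases "vs ! j = x")
        case True
        then have "vs ! Suc j = y" using ej xy by (auto simp: doubleton_eq_iff)
        then show ?thesis using that[of a1 a2] True in1 en1 l1 l2 by auto
      next
        case False
        then have "vs ! j = y" "vs ! Suc j = x" using ej xy by (auto simp: doubleton_eq_iff)
        then show ?thesis using that[of a2 a1] in1 en1 l1 l2 by (auto simp: insert_commute)
      qed
    qed
    define vs2 where "vs2 = take (Suc j) vs @ z # drop (Suc j) vs"
    define es2 where "es2 = take j es @ h1 # h2 # drop (Suc j) es"
    have jn: "j < n" using j n_def by simp
    have lvs2: "length vs2 = Suc (Suc n)" unfolding vs2_def using lvs jn by auto
    have les2: "length es2 = Suc n" unfolding es2_def using n_def jn by auto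
    have vs2n: "vs2 ! i = (if i \<le> j then vs ! i else if i = Suc j then z else vs ! (i - 1))"
      if "i < Suc (Suc n)" for i
      unfolding vs2_def using that jn lvs by (auto simp: nth_append nth_Cons' numeral_2_eq_2 Suc_diff_Suc)
    have es2n: "es2 ! i = (if i < j then es ! i else if i = j then h1 else if i = Suc j then h2 else es ! (i - 1))"
      if "i < Suc n" for i
      unfolding es2_def using that jn n_def by (auto simp: nth_append nth_Cons' min_def numeral_2_eq_2 Suc_diff_Suc)
    have oth: "es ! i \<in> E' \<and> ends' (es ! i) = {vs ! i, vs ! Suc i}" if "i < n" "i \<noteq> j" for i
      using A(7)[of i] uniq[OF that] e_old E'_eq that n_def by auto
    have edges2: "es2 ! i \<in> E' \<and> ends' (es2 ! i) = {vs2 ! i, vs2 ! Suc i}" if "i < length es2" for i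
    proof -
      consider "i < j" | "i = j" | "i = Suc j" | "i > Suc j" by linarith
      then show ?thesis
      proof cases
        case 1
        then show ?thesis using es2n vs2n oth that les2 jn by auto
      next
        case 2
        then show ?thesis using es2n vs2n h that les2 jn by auto
      next
        case 3
        then show ?thesis using es2n vs2n h that les2 jn by auto
      next
        case 4
        then have "es2 ! i = es ! (i - 1)" "vs2 ! i = vs ! (i - 1)" "vs2 ! Suc i = vs ! i"
          using es2n vs2n that les2 jn by auto
        moreover have "Suc (i - 1) = i" using 4 by simp
        ultimately show ?thesis using oth[of "i - 1"] that les2 4 by auto
      qed
    qed
    have es_dec: "es = take j es @ es ! j # drop (Suc j) es"
      using id_take_nth_drop[OF j(1)] .
    have "sorted (map lam (take j es @ es ! j # drop (Suc j) es))"
      using A(8) es_dec by simp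
    then have "sorted (map lam (take j es) @ lam (es ! j) # lam (es ! j) # map lam (drop (Suc j) es))"
      by (auto simp: sorted_append)
    moreover have m1: "map lam' (take j es) = map lam (take j es)"
      unfolding map_eq_conv
    proof
      fix e assume "e \<in> set (take j es)"
      then obtain i where "i < j" "e = es ! i" using jn n_def by (auto simp: in_set_conv_nth)
      then show "lam' e = lam e" using A(7)[of i] jn n_def lam'_E by auto
    qed
    moreover have m2: "map lam' (drop (Suc j) es) = map lam (drop (Suc j) es)"
      unfolding map_eq_conv
    proof
      fix e assume "e \<in> set (drop (Suc j) es)"
      then obtain i where "i < n - Suc j" "e = es ! (Suc j + i)" using jn n_def by (auto simp: in_set_conv_nth)
      then have "Suc j + i < n" "e = es ! (Suc j + i)" by auto
      then show "lam' e = lam e" using A(7)[of "Suc j + i"] n_def lam'_E by auto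
    qed
    ultimately have sorted2: "sorted (map lam' es2)"
      unfolding es2_def map_append list.map m1 m2 using h by simp
    have zvs: "z \<notin> set vs" using A(5) zV by auto
    have vs_dec: "vs = take (Suc j) vs @ drop (Suc j) vs" by simp
    have su: "set (take (Suc j) vs) \<union> set (drop (Suc j) vs) = set vs"
      using set_append[of "take (Suc j) vs" "drop (Suc j) vs"] by simp
    have dist2: "distinct vs2"
      using A(4) zvs su set_take_disj_set_drop_if_distinct[OF A(4), of "Suc j" "Suc j"] unfolding vs2_def
      by auto
    have set2: "set vs2 = insert z (set vs)"
      unfolding vs2_def using su by auto
    have hd2: "hd vs2 = s"
      using A(1,2) unfolding vs2_def by simp
    have dk: "drop (Suc j) vs \<noteq> []" using jn lvs by simp
    have last2: "last vs2 = t"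
      using A(3) jn lvs dk unfolding vs2_def by simp
    have "temporal_path (insert z V) E' ends' lam' S s t (vs2, es2)"
      unfolding temporal_path_def Let_def fst_conv snd_conv
      using dist2 set2 hd2 last2 lvs2 les2 edges2 sorted2 A(5) zS
      by auto
    then show ?thesis by blast
  qed
qed

end


context subdiv begin

lemma cut_transfer:
  assumes sV: "s \<in> V" and tV: "t \<in> V" and st: "s \<noteq> t" and nadj: "\<not> adjacent E ends s t"
    and ne: "Exy \<noteq> {}"
    and cut: "temporal_vertex_cut (insert z V) E' ends' lam' s t S"
  shows "\<exists>S'. temporal_vertex_cut V E ends lam s t S' \<and> card S' \<le> card S"
proof -
  have finV: "finite V" using mg unfolding multigraph_def by auto
  have Ssub: "S \<subseteq> insert z V - {s, t}" and nop: "\<And>P. \<not> temporal_path (insert z V) E' ends' lam' S s t P"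
    using cut unfolding temporal_vertex_cut_def by auto
  have finS: "finite S" using Ssub finV by (meson finite_Diff finite_insert finite_subset)
  show ?thesis
  proof (cases "z \<in> S")
    case False
    have "temporal_vertex_cut V E ends lam s t S"
      unfolding temporal_vertex_cut_def
    proof (intro conjI notI)
      show "S \<subseteq> V - {s, t}" using Ssub False by auto
      assume "\<exists>P. temporal_path V E ends lam S s t P"
      then obtain P where "temporal_path V E ends lam S s t P" by blast
      then show False using expand[OF _ False] nop by blast
    qed
    then show ?thesis by blast
  next
    case True
    obtain w where w: "w \<in> {x, y}" "w \<noteq> s" "w \<noteq> t"
    proof (cases "x \<noteq> s \<and> x \<noteq> t")
      case True
      then show ?thesis using that by auto
    next
      case False
      have "y \<noteq> s \<and> y \<noteq> t"
      proof (rule ccontr)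
        assume "\<not> (y \<noteq> s \<and> y \<noteq> t)"
        then have "{x, y} = {s, t}" using False xy st by auto
        moreover obtain e where "e \<in> Exy" using ne by auto
        ultimately have "e \<in> E \<and> ends e = {s, t}" using Exy_E by auto
        then show False using nadj unfolding adjacent_def by auto
      qed
      then show ?thesis using that by auto
    qed
    have wV: "w \<in> V" using w xV yV by auto
    define S' where "S' = insert w (S - {z})"
    have card: "card S' \<le> card S"
    proof -
      have "card S' \<le> Suc (card (S - {z}))" unfolding S'_def using finS
        by (simp add: card_insert_if)
      also have "\<dots> = card S" using card_Suc_Diff1[OF finS True] by simp
      finally show ?thesis .
    qed
    have "temporal_vertex_cut V E ends lam s t S'"
      unfolding temporal_vertex_cut_def
    proof (intro conjI notI)
      show "S' \<subseteq> V - {s, t}" using Ssub w wV unfolding S'_def by auto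
      assume "\<exists>P. temporal_path V E ends lam S' s t P"
      then obtain vs es where tpv: "temporal_path V E ends lam S' s t (vs, es)" by (metis prod.collapse)
      have A: "set vs \<subseteq> V - S'" "length es + 1 = length vs"
        "\<And>i. i < length es \<Longrightarrow> es ! i \<in> E \<and> ends (es ! i) = {vs ! i, vs ! Suc i}"
        using tpv unfolding temporal_path_def Let_def by auto
      show False
      proof (cases "\<exists>j < length es. es ! j \<in> Exy")
        case True
        then obtain j where j: "j < length es" "es ! j \<in> Exy" by blast
        then have eqj: "{vs ! j, vs ! Suc j} = {x, y}" using A(3) Exy_E by auto
        have "{vs ! j, vs ! Suc j} \<subseteq> set vs" using j A(2) by auto
        then have "{x, y} \<subseteq> set vs" using eqj by simp
        then have "w \<in> set vs" using w by auto
        then show False using A(1) unfolding S'_def by auto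
      next
        case False
        have "temporal_path V E ends lam S s t (vs, es)"
          using tpv A(1) zV unfolding temporal_path_def Let_def S'_def by auto
        then have "temporal_path (insert z V) E' ends' lam' S s t (vs, es)"
          using lift_noxy False by blast
        then show False using nop by blast
      qed
    qed
    then show ?thesis using card by blast
  qed
qed

end

theorem lemma2:
  fixes V V' :: "'a set" and E E' :: "'e set"
    and ends ends' :: "'e \<Rightarrow> 'a set" and x y z :: 'a
  assumes "multigraph V E ends"
    and "\<not> mengerian V E ends"
    and "x \<in> V" and "y \<in> V" and "x \<noteq> y"
    and "edges_between E ends x y \<noteq> {}"
    and "m_subdivision V E ends x y z V' E' ends'"
  shows "\<not> mengerian V' E' ends'"
proof
  assume men': "mengerian V' E' ends'"
  obtain lam s t where lam: "\<forall>e\<in>E. 0 < lam e" and sV: "s \<in> V" and tV: "t \<in> V" and st: "s \<noteq> t"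
    and nadj: "\<not> adjacent E ends s t"
    and neq: "max_disjoint_paths V E ends lam s t \<noteq> min_vertex_cut V E ends lam s t"
    using assms(2) unfolding mengerian_def by blast
  define Exy where "Exy = edges_between E ends x y"
  obtain E1 E2 where zV: "z \<notin> V" and V': "V' = insert z V" and
    E12: "finite E1" "finite E2" "card E1 = card Exy" "card E2 = card Exy"
       "E1 \<inter> E2 = {}" "E1 \<inter> E = {}" "E2 \<inter> E = {}"
       "E' = (E - Exy) \<union> E1 \<union> E2"
       "\<forall>e\<in>E - Exy. ends' e = ends e" "\<forall>e\<in>E1. ends' e = {x, z}" "\<forall>e\<in>E2. ends' e = {z, y}"
    using assms(7) unfolding m_subdivision_def Let_def Exy_def by blast
  have finV: "finite V" and finE: "finite E" using assms(1) unfolding multigraph_def by auto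
  have finExy: "finite Exy" unfolding Exy_def edges_between_def using finE by auto
  obtain f1 where f1: "bij_betw f1 E1 Exy" using finite_same_card_bij[OF E12(1) finExy E12(3)] by blast
  obtain f2 where f2: "bij_betw f2 E2 Exy" using finite_same_card_bij[OF E12(2) finExy E12(4)] by blast
  define lam' where "lam' = (\<lambda>e. if e \<in> E1 then lam (f1 e) else if e \<in> E2 then lam (f2 e) else lam e)"
  interpret sd: subdiv V E ends lam x y z E1 E2 f1 f2 E' ends' lam'
    apply unfold_locales
    using assms(1,3,4,5) zV E12 f1 f2 lam'_def unfolding Exy_def by auto
  have ExyE: "Exy \<subseteq> E" unfolding Exy_def edges_between_def by auto
  have pos: "\<forall>e\<in>E'. 0 < lam' e"
  proof
    fix e assume "e \<in> E'"
    show "0 < lam' e"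
    proof (cases "e \<in> E1")
      case True
      then have "f1 e \<in> E" using f1 ExyE unfolding bij_betw_def by auto
      then show ?thesis using True lam unfolding lam'_def by auto
    next
      case False
      show ?thesis
      proof (cases "e \<in> E2")
        case True
        then have "f2 e \<in> E" using f2 ExyE unfolding bij_betw_def by auto
        then show ?thesis using True False lam unfolding lam'_def by auto
      next
        case False2: False
        then have "e \<in> E" using \<open>e \<in> E'\<close> False E12(8) by auto
        then show ?thesis using False False2 lam unfolding lam'_def by auto
      qed
    qed
  qed
  have nadj': "\<not> adjacent E' ends' s t"
  proof
    assume "adjacent E' ends' s t"
    then obtain e where "e \<in> E'" "ends' e = {s, t}" unfolding adjacent_def by auto
    then have "e \<in> E \<and> ends e = {s, t}" using sd.edge_noz sV tV zV by blast
    then show False using nadj unfolding adjacent_def by auto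
  qed
  have eq': "max_disjoint_paths V' E' ends' lam' s t = min_vertex_cut V' E' ends' lam' s t"
    using men' pos sV tV st nadj' V' unfolding mengerian_def by blast
  have finV': "finite V'" using finV V' by simp
  define p' where "p' = max_disjoint_paths V' E' ends' lam' s t"
  define c' where "c' = min_vertex_cut V' E' ends' lam' s t"
  define p where "p = max_disjoint_paths V E ends lam s t"
  define c where "c = min_vertex_cut V E ends lam s t"
  have "p' \<le> p"
  proof -
    obtain P where P: "family V' E' ends' lam' s t p' P"
      using mdp_props(1)[OF finV' st nadj'] unfolding p'_def by blast
    define Q where "Q i = (SOME Q. temporal_path V E ends lam {} s t Q \<and> set (fst Q) \<subseteq> set (fst (P i)))" for i
    have Q: "temporal_path V E ends lam {} s t (Q i) \<and> set (fst (Q i)) \<subseteq> set (fst (P i))" if "i < p'" for i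
    proof -
      have "temporal_path (insert z V) E' ends' lam' {} s t (P i)" using P that V' unfolding family_def by auto
      from sd.contract[OF this sV tV] show ?thesis unfolding Q_def by (rule someI_ex)
    qed
    have "family V E ends lam s t p' Q"
      unfolding family_def
    proof (intro conjI allI impI)
      fix i assume "i < p'" then show "temporal_path V E ends lam {} s t (Q i)" using Q by auto
    next
      fix i j assume "i < p'" "j < p'" "i \<noteq> j"
      then have "paths_disjoint s t (P i) (P j)" using P unfolding family_def by auto
      then show "paths_disjoint s t (Q i) (Q j)" using Q[of i] Q[of j] \<open>i < p'\<close> \<open>j < p'\<close>
        unfolding paths_disjoint_def by blast
    qed
    then show ?thesis using mdp_props(2)[OF finV st nadj] unfolding p_def by blast
  qed
  moreover have "c \<le> c'"
  proof -
    obtain S where S: "temporal_vertex_cut V' E' ends' lam' s t S" "card S = c'"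
      using mvc_props(1)[OF finV' st nadj'] unfolding c'_def by blast
    obtain S' where "temporal_vertex_cut V E ends lam s t S'" "card S' \<le> card S"
      using sd.cut_transfer[OF sV tV st nadj] assms(6) S(1) V' by blast
    then show ?thesis using mvc_props(2)[OF finV st nadj] S(2) unfolding c_def by fastforce
  qed
  moreover have "p \<le> c" using weak_duality[OF finV st nadj] unfolding p_def c_def .
  moreover have "p \<noteq> c" using neq unfolding p_def c_def .
  moreover have "p' = c'" using eq' unfolding p'_def c'_def .
  ultimately show False by linarith
qed


end
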